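(* Let $G$ be a claw-free graph (i.e., $G$ contains no induced subgraph isomorphic to $K_{1,3}$). Then $\alpha_{\mathrm{od}}(G)=\alpha(G^2)$ and $\chi_{\mathrm{so}}(G)=\chi(G^2)$.
   Context: All graphs are finite, simple and undirected. For a vertex $v$, $N(v)$ is its open neighborhood. An odd independent set in a graph $G=(V,E)$ is an independent set $S\subseteq V$ such that for every $v\in V\setminus S$, either $N(v)\cap S=\varnothing$ or $|N(v)\cap S|$ is odd. $\alpha_{\mathrm{od}}(G)$ denotes the maximum size of an odd independent set of $G$. A strong odd coloring of $G$ is a proper vertex coloring such that for every vertex $v$, each color used on $N(v)$ appears an odd number of times in $N(v)$; $\chi_{\mathrm{so}}(G)$ is the minimum number of colors in a strong odd coloring. $G^2$ is the square of $G$: same vertex set, two distinct vertices adjacent iff their distance in $G$ is at most $2$. $\alpha$ and $\chi$ denote independence number and chromatic number. *)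

theory Defs
  imports Main
begin

definition graph :: "'a set \<Rightarrow> ('a \<Rightarrow> 'a \<Rightarrow> bool) \<Rightarrow> bool" where
  "graph V E \<longleftrightarrow> finite V \<and> (\<forall>x y. E x y \<longrightarrow> x \<in> V \<and> y \<in> V)
     \<and> (\<forall>x y. E x y \<longrightarrow> E y x) \<and> (\<forall>x. \<not> E x x)"

definition nbr :: "'a set \<Rightarrow> ('a \<Rightarrow> 'a \<Rightarrow> bool) \<Rightarrow> 'a \<Rightarrow> 'a set" where
  "nbr V E v = {u \<in> V. E v u}"

definition claw_free :: "'a set \<Rightarrow> ('a \<Rightarrow> 'a \<Rightarrow> bool) \<Rightarrow> bool" where
  "claw_free V E \<longleftrightarrow> \<not> (\<exists>a\<in>V. \<exists>b\<in>V. \<exists>c\<in>V. \<exists>d\<in>V.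
     E a b \<and> E a c \<and> E a d \<and> b \<noteq> c \<and> b \<noteq> d \<and> c \<noteq> d
     \<and> \<not> E b c \<and> \<not> E b d \<and> \<not> E c d)"

definition square :: "'a set \<Rightarrow> ('a \<Rightarrow> 'a \<Rightarrow> bool) \<Rightarrow> 'a \<Rightarrow> 'a \<Rightarrow> bool" where
  "square V E x y \<longleftrightarrow> x \<in> V \<and> y \<in> V \<and> x \<noteq> y \<and> (E x y \<or> (\<exists>z\<in>V. E x z \<and> E z y))"

definition independent :: "'a set \<Rightarrow> ('a \<Rightarrow> 'a \<Rightarrow> bool) \<Rightarrow> 'a set \<Rightarrow> bool" where
  "independent V E S \<longleftrightarrow> S \<subseteq> V \<and> (\<forall>x\<in>S. \<forall>y\<in>S. \<not> E x y)"

definition odd_independent :: "'a set \<Rightarrow> ('a \<Rightarrow> 'a \<Rightarrow> bool) \<Rightarrow> 'a set \<Rightarrow> bool" where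
  "odd_independent V E S \<longleftrightarrow> independent V E S \<and>
     (\<forall>v \<in> V - S. nbr V E v \<inter> S = {} \<or> odd (card (nbr V E v \<inter> S)))"

definition alpha :: "'a set \<Rightarrow> ('a \<Rightarrow> 'a \<Rightarrow> bool) \<Rightarrow> nat" where
  "alpha V E = Max {card S | S. independent V E S}"

definition alpha_od :: "'a set \<Rightarrow> ('a \<Rightarrow> 'a \<Rightarrow> bool) \<Rightarrow> nat" where
  "alpha_od V E = Max {card S | S. odd_independent V E S}"

definition proper_coloring :: "'a set \<Rightarrow> ('a \<Rightarrow> 'a \<Rightarrow> bool) \<Rightarrow> ('a \<Rightarrow> nat) \<Rightarrow> bool" where
  "proper_coloring V E c \<longleftrightarrow> (\<forall>x\<in>V. \<forall>y\<in>V. E x y \<longrightarrow> c x \<noteq> c y)"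

definition strong_odd_coloring :: "'a set \<Rightarrow> ('a \<Rightarrow> 'a \<Rightarrow> bool) \<Rightarrow> ('a \<Rightarrow> nat) \<Rightarrow> bool" where
  "strong_odd_coloring V E c \<longleftrightarrow> proper_coloring V E c \<and>
     (\<forall>v\<in>V. \<forall>i \<in> c ` nbr V E v. odd (card {u \<in> nbr V E v. c u = i}))"

definition chi :: "'a set \<Rightarrow> ('a \<Rightarrow> 'a \<Rightarrow> bool) \<Rightarrow> nat" where
  "chi V E = Min {card (c ` V) | c. proper_coloring V E c}"

definition chi_so :: "'a set \<Rightarrow> ('a \<Rightarrow> 'a \<Rightarrow> bool) \<Rightarrow> nat" where
  "chi_so V E = Min {card (c ` V) | c. strong_odd_coloring V E c}"

end

theory Submission
  imports Defs
begin

lemma three_elems: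
  assumes "finite A" "odd (card A)" "x \<in> A" "y \<in> A" "x \<noteq> y"
  shows "\<exists>w\<in>A. w \<noteq> x \<and> w \<noteq> y"
proof (rule ccontr)
  assume "\<not> ?thesis"
  then have "A = {x, y}" using assms by auto
  then have "card A = 2" using assms by simp
  then show False using assms by simp
qed

lemma claw_contra:
  assumes "claw_free V E" "a \<in> V" "b \<in> V" "c \<in> V" "d \<in> V"
    "E a b" "E a c" "E a d" "b \<noteq> c" "b \<noteq> d" "c \<noteq> d"
    "\<not> E b c" "\<not> E b d" "\<not> E c d"
  shows False
  using assms unfolding claw_free_def by blast

lemma odd_ind_iff:
  assumes g: "graph V E" and cf: "claw_free V E"
  shows "odd_independent V E S \<longleftrightarrow> independent V (square V E) S"
proof
  assume oi: "odd_independent V E S"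
  then have ind: "independent V E S" by (simp add: odd_independent_def)
  then have SV: "S \<subseteq> V" by (simp add: independent_def)
  have fin: "finite V" using g by (simp add: graph_def)
  show "independent V (square V E) S"
    unfolding independent_def
  proof (intro conjI SV ballI notI)
    fix x y assume xS: "x \<in> S" and yS: "y \<in> S" and sq: "square V E x y"
    have "\<not> E x y" using ind xS yS by (simp add: independent_def)
    with sq obtain z where zV: "z \<in> V" and xz: "E x z" and zy: "E z y" and xy: "x \<noteq> y"
      by (auto simp: square_def)
    have zx: "E z x" using g xz by (simp add: graph_def)
    have zS: "z \<notin> S" using ind xS xz by (auto simp: independent_def)
    let ?A = "nbr V E z \<inter> S"
    have xA: "x \<in> ?A" and yA: "y \<in> ?A" using zx zy xS yS SV by (auto simp: nbr_def)
    have "?A = {} \<or> odd (card ?A)" using oi zV zS unfolding odd_independent_def by blast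
    then have "odd (card ?A)" using xA by blast
    moreover have "finite ?A" using fin by (simp add: nbr_def)
    ultimately obtain w where wA: "w \<in> ?A" and "w \<noteq> x" "w \<noteq> y"
      using three_elems[of ?A x y] xA yA xy by blast
    moreover have "E z w" "w \<in> S" "w \<in> V" using wA by (auto simp: nbr_def)
    moreover have "\<not> E x y" "\<not> E x w" "\<not> E y w" using ind xS yS \<open>w \<in> S\<close>
      by (auto simp: independent_def)
    ultimately show False using claw_contra[OF cf zV, of x y w] xS yS SV zx zy xy
      by blast
  qed
next
  assume i2: "independent V (square V E) S"
  then have SV: "S \<subseteq> V" by (simp add: independent_def)
  have ind: "independent V E S"
    unfolding independent_def
  proof (intro conjI SV ballI notI)
    fix x y assume "x \<in> S" "y \<in> S" "E x y"
    moreover have "x \<noteq> y" using g \<open>E x y\<close> by (auto simp: graph_def)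
    ultimately have "square V E x y" using SV by (auto simp: square_def)
    then show False using i2 \<open>x \<in> S\<close> \<open>y \<in> S\<close> by (simp add: independent_def)
  qed
  have "odd (card (nbr V E v \<inter> S))" if vV: "v \<in> V" and ne: "nbr V E v \<inter> S \<noteq> {}" for v
  proof -
    obtain x where xA: "x \<in> nbr V E v \<inter> S" using ne by blast
    have "nbr V E v \<inter> S = {x}"
    proof (rule ccontr)
      assume "nbr V E v \<inter> S \<noteq> {x}"
      then obtain y where yA: "y \<in> nbr V E v \<inter> S" and xy: "y \<noteq> x" using xA by blast
      have "E x v" using g xA by (auto simp: nbr_def graph_def)
      then have "square V E x y" using xA yA xy vV by (auto simp: square_def nbr_def)
      then show False using i2 xA yA by (simp add: independent_def)
    qed
    then show ?thesis by simp
  qed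
  then show "odd_independent V E S" using ind by (auto simp: odd_independent_def)
qed

lemma so_iff:
  assumes g: "graph V E" and cf: "claw_free V E"
  shows "strong_odd_coloring V E c \<longleftrightarrow> proper_coloring V (square V E) c"
proof
  assume so: "strong_odd_coloring V E c"
  then have pc: "proper_coloring V E c" by (simp add: strong_odd_coloring_def)
  have fin: "finite V" using g by (simp add: graph_def)
  show "proper_coloring V (square V E) c"
    unfolding proper_coloring_def
  proof (intro ballI impI notI)
    fix x y assume xV: "x \<in> V" and yV: "y \<in> V" and sq: "square V E x y" and cxy: "c x = c y"
    have "\<not> E x y" using pc xV yV cxy by (auto simp: proper_coloring_def)
    with sq obtain z where zV: "z \<in> V" and xz: "E x z" and zy: "E z y" and xy: "x \<noteq> y"
      by (auto simp: square_def)
    have zx: "E z x" using g xz by (simp add: graph_def)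
    let ?A = "{u \<in> nbr V E z. c u = c x}"
    have xA: "x \<in> ?A" and yA: "y \<in> ?A" using zx zy xV yV cxy by (auto simp: nbr_def)
    have xN: "x \<in> nbr V E z" using xA by simp
    have "\<forall>i \<in> c ` nbr V E z. odd (card {u \<in> nbr V E z. c u = i})"
      using so zV unfolding strong_odd_coloring_def by blast
    then have "odd (card ?A)" using xN by blast
    moreover have "finite ?A" using fin by (simp add: nbr_def)
    ultimately obtain w where wA: "w \<in> ?A" and "w \<noteq> x" "w \<noteq> y"
      using three_elems[of ?A x y] xA yA xy by blast
    moreover have "E z w" "c w = c x" "w \<in> V" using wA by (auto simp: nbr_def)
    moreover have "\<not> E x y" "\<not> E x w" "\<not> E y w" using pc xV yV \<open>w \<in> V\<close> \<open>c w = c x\<close> cxy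
      unfolding proper_coloring_def by metis+
    ultimately show False using claw_contra[OF cf zV xV yV, of w] zx zy xy
      by blast
  qed
next
  assume p2: "proper_coloring V (square V E) c"
  have pc: "proper_coloring V E c"
    unfolding proper_coloring_def
  proof (intro ballI impI)
    fix x y assume "x \<in> V" "y \<in> V" "E x y"
    moreover have "x \<noteq> y" using g \<open>E x y\<close> by (auto simp: graph_def)
    ultimately have "square V E x y" by (auto simp: square_def)
    then show "c x \<noteq> c y" using p2 \<open>x \<in> V\<close> \<open>y \<in> V\<close> by (simp add: proper_coloring_def)
  qed
  have h: "odd (card {u \<in> nbr V E v. c u = i})" if vV: "v \<in> V" and iv: "i \<in> c ` nbr V E v" for v i
  proof -
    obtain x where xN: "x \<in> nbr V E v" and ci: "c x = i" using iv by blast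
    have "{u \<in> nbr V E v. c u = i} = {x}"
    proof (rule ccontr)
      assume "{u \<in> nbr V E v. c u = i} \<noteq> {x}"
      then obtain y where yN: "y \<in> nbr V E v" and cy: "c y = i" and xy: "y \<noteq> x" using xN ci by blast
      have "E x v" using g xN by (auto simp: nbr_def graph_def)
      then have "square V E x y" using xN yN xy vV by (auto simp: square_def nbr_def)
      moreover have "x \<in> V" "y \<in> V" using xN yN by (auto simp: nbr_def)
      ultimately show False using p2 ci cy unfolding proper_coloring_def by metis
    qed
    then show ?thesis by simp
  qed
  show "strong_odd_coloring V E c" unfolding strong_odd_coloring_def
  proof (intro conjI pc ballI)
    fix v i assume "v \<in> V" "i \<in> c ` nbr V E v"
    then show "odd (card {u \<in> nbr V E v. c u = i})" by (rule h)
  qed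
qed

theorem theorem1:
  fixes V :: "'a set" and E :: "'a \<Rightarrow> 'a \<Rightarrow> bool"
  assumes "graph V E" and "claw_free V E"
  shows "alpha_od V E = alpha V (square V E) \<and> chi_so V E = chi V (square V E)"
proof
  have "\<And>S. odd_independent V E S = independent V (square V E) S" by (rule odd_ind_iff[OF assms])
  then show "alpha_od V E = alpha V (square V E)" unfolding alpha_od_def alpha_def by (simp only:)
  have "\<And>c. strong_odd_coloring V E c = proper_coloring V (square V E) c" by (rule so_iff[OF assms])
  then show "chi_so V E = chi V (square V E)" unfolding chi_so_def chi_def by (simp only:)
qed

end
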